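(* Suppose $A\subseteq\mathbb Z_m$ with $d<|A|<m$, and let $G_d$ be the set of $x\in\mathbb Z_m$ such that $|(A+x)\cup A|\le|A|+d$. Then $|G_d|\le\frac{|A|^2}{|A|-d}$.
   Context: $A+x=\{a+x:a\in A\}$ in the cyclic group $\mathbb Z_m$. *)

theory Defs
  imports Complex_Main
begin

text \<open>The cyclic group Z_m is modelled by the carrier {..<m} of natural numbers
with addition modulo m. The translate A + x = {a + x : a in A}.\<close>

definition zm_translate :: "nat \<Rightarrow> nat set \<Rightarrow> nat \<Rightarrow> nat set" where
  "zm_translate m A x = (\<lambda>a. (a + x) mod m) ` A"

end

theory Submission
  imports Defs
begin

lemma inj_aux:
  fixes a b x m :: nat
  assumes "a < m" "b < m" "(a + x) mod m = (b + x) mod m"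
  shows "a = b"
proof -
  have "int ((a + x) mod m) = int ((b + x) mod m)" using assms(3) by simp
  hence "(int a + int x) mod int m = (int b + int x) mod int m"
    by (simp only: zmod_int of_nat_add)
  hence "(int a + int x - int x) mod int m = (int b + int x - int x) mod int m"
    by (rule mod_diff_cong) (rule refl)
  hence "int a mod int m = int b mod int m" by simp
  thus ?thesis using assms(1,2) by simp
qed

lemma cnt_le:
  fixes A :: "nat set"
  assumes "A \<subseteq> {..<m}" "finite A"
  shows "card {a\<in>A. (a + x) mod m \<in> A} \<ge> card (zm_translate m A x \<inter> A)"
proof -
  have "zm_translate m A x \<inter> A = (\<lambda>a. (a + x) mod m) ` {a\<in>A. (a + x) mod m \<in> A}"
    unfolding zm_translate_def by auto
  moreover have "finite {a\<in>A. (a + x) mod m \<in> A}" using assms(2) by simp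
  ultimately show ?thesis using card_image_le by simp
qed

lemma card_tr:
  fixes A :: "nat set"
  assumes "A \<subseteq> {..<m}"
  shows "card (zm_translate m A x) = card A"
  unfolding zm_translate_def
proof (rule card_image)
  show "inj_on (\<lambda>a. (a + x) mod m) A"
    using assms inj_aux unfolding inj_on_def by blast
qed

lemma col_le:
  fixes A :: "nat set"
  assumes "A \<subseteq> {..<m}" "finite A"
  shows "card {x\<in>{..<m}. (a + x) mod m \<in> A} \<le> card A"
proof -
  have "inj_on (\<lambda>x. (a + x) mod m) {x\<in>{..<m}. (a + x) mod m \<in> A}"
    unfolding inj_on_def using inj_aux by (auto simp: add.commute)
  moreover have "(\<lambda>x. (a + x) mod m) ` {x\<in>{..<m}. (a + x) mod m \<in> A} \<subseteq> A" by auto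
  ultimately show ?thesis using assms(2) card_inj_on_le by blast
qed

theorem lemma2p6:
  fixes m d :: nat and A :: "nat set"
  assumes "A \<subseteq> {..<m}" and "d < card A" and "card A < m"
  shows "real (card {x \<in> {..<m}. card (zm_translate m A x \<union> A) \<le> card A + d})
           \<le> real (card A) ^ 2 / (real (card A) - real d)"
proof -
  define k where "k = card A"
  define G where "G = {x \<in> {..<m}. card (zm_translate m A x \<union> A) \<le> card A + d}"
  define c where "c = (\<lambda>x. card {a\<in>A. (a + x) mod m \<in> A})"
  have fA: "finite A" using assms(1) finite_subset by blast
  have fT: "finite (zm_translate m A x)" for x unfolding zm_translate_def using fA by simp
  have low: "k - d \<le> c x" if "x \<in> G" for x
  proof -
    have "card (zm_translate m A x \<union> A) + card (zm_translate m A x \<inter> A) = k + k"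
      using card_Un_Int[OF fT fA, of x] card_tr[OF assms(1)] k_def by simp
    moreover have "card (zm_translate m A x \<union> A) \<le> k + d" using that G_def k_def by simp
    moreover have "card (zm_translate m A x \<inter> A) \<le> c x" using cnt_le[OF assms(1) fA] c_def by simp
    ultimately show ?thesis by linarith
  qed
  have GS: "G \<subseteq> {..<m}" unfolding G_def by auto
  have "card G * (k - d) = (\<Sum>x\<in>G. k - d)" by simp
  also have "\<dots> \<le> (\<Sum>x\<in>G. c x)" using low by (rule sum_mono)
  also have "\<dots> \<le> (\<Sum>x\<in>{..<m}. c x)" using GS by (intro sum_mono2) auto
  also have "\<dots> = (\<Sum>x\<in>{..<m}. \<Sum>a\<in>A. if (a + x) mod m \<in> A then 1 else 0)"
    unfolding c_def using fA by (simp add: sum.If_cases Int_def)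
  also have "\<dots> = (\<Sum>a\<in>A. \<Sum>x\<in>{..<m}. if (a + x) mod m \<in> A then 1 else 0)"
    by (rule sum.swap)
  also have "\<dots> = (\<Sum>a\<in>A. card {x\<in>{..<m}. (a + x) mod m \<in> A})"
    by (simp add: sum.If_cases Int_def)
  also have "\<dots> \<le> (\<Sum>a\<in>A. k)" using col_le[OF assms(1) fA] k_def by (intro sum_mono) auto
  also have "\<dots> = k ^ 2" using k_def by (simp add: power2_eq_square)
  finally have main: "card G * (k - d) \<le> k ^ 2" .
  have "real (card G) * (real k - real d) \<le> real k ^ 2"
    using main assms(2) k_def by (metis of_nat_diff of_nat_le_iff of_nat_mult of_nat_power less_imp_le)
  moreover have "real k - real d > 0" using assms(2) k_def by simp
  ultimately show ?thesis unfolding G_def k_def by (simp add: pos_le_divide_eq)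
qed

end
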